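(* The variety $\mathsf{V}(S_{(4,453)})$ is the ai-semiring variety defined by the identities $x^2y\approx xy$, $xy^2\approx xy$, $xyz\approx xzy$, $x^2\approx x^2+x$, $xy\approx xy+xyz$, $x+yz\approx x+yz+yx$.
   Context: An ai-semiring is an algebra $(S,+,\cdot)$ with $(S,+)$ a semilattice, $(S,\cdot)$ a semigroup, and both distributive laws. $\mathsf{V}(S)$ is the variety generated by $S$; "the ai-semiring variety defined by identities $\Sigma$" is the class of all ai-semirings satisfying $\Sigma$. $S_{(4,453)}$ has carrier $\{1,2,3,4\}$; addition: $x+x=x$, $2+x=x$, $1+x=1$ for all $x$, $3+4=1$; multiplication (row $a$, column $b$ gives $a\cdot b$): row $1$: $1,4,1,4$; row $2$: $2,2,2,2$; row $3$: $1,4,1,4$; row $4$: $4,4,4,4$. *)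

theory Defs
  imports "HOL-Library.FuncSet"
begin

text \<open>An algebra of type (2,2) is given by a carrier set C and two binary operations
  p (addition) and m (multiplication); only their behaviour on C matters.\<close>

definition ai_semiring :: "'a set \<Rightarrow> ('a \<Rightarrow> 'a \<Rightarrow> 'a) \<Rightarrow> ('a \<Rightarrow> 'a \<Rightarrow> 'a) \<Rightarrow> bool" where
  "ai_semiring C p m \<longleftrightarrow>
     (\<forall>x\<in>C. \<forall>y\<in>C. p x y \<in> C \<and> m x y \<in> C) \<and>
     (\<forall>x\<in>C. p x x = x) \<and>
     (\<forall>x\<in>C. \<forall>y\<in>C. p x y = p y x) \<and>
     (\<forall>x\<in>C. \<forall>y\<in>C. \<forall>z\<in>C. p (p x y) z = p x (p y z)) \<and>
     (\<forall>x\<in>C. \<forall>y\<in>C. \<forall>z\<in>C. m (m x y) z = m x (m y z)) \<and>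
     (\<forall>x\<in>C. \<forall>y\<in>C. \<forall>z\<in>C. m x (p y z) = p (m x y) (m x z)) \<and>
     (\<forall>x\<in>C. \<forall>y\<in>C. \<forall>z\<in>C. m (p x y) z = p (m x z) (m y z))"

definition sat_Sigma :: "'a set \<Rightarrow> ('a \<Rightarrow> 'a \<Rightarrow> 'a) \<Rightarrow> ('a \<Rightarrow> 'a \<Rightarrow> 'a) \<Rightarrow> bool" where
  "sat_Sigma C p m \<longleftrightarrow>
     (\<forall>x\<in>C. \<forall>y\<in>C. m (m x x) y = m x y) \<and>
     (\<forall>x\<in>C. \<forall>y\<in>C. m x (m y y) = m x y) \<and>
     (\<forall>x\<in>C. \<forall>y\<in>C. \<forall>z\<in>C. m (m x y) z = m (m x z) y) \<and>
     (\<forall>x\<in>C. m x x = p (m x x) x) \<and>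
     (\<forall>x\<in>C. \<forall>y\<in>C. \<forall>z\<in>C. m x y = p (m x y) (m (m x y) z)) \<and>
     (\<forall>x\<in>C. \<forall>y\<in>C. \<forall>z\<in>C. p x (m y z) = p (p x (m y z)) (m y x))"

definition S4 :: "nat set" where "S4 = {1,2,3,4}"

definition plus4 :: "nat \<Rightarrow> nat \<Rightarrow> nat" where
  "plus4 x y = (if x = y then x else if x = 2 then y else if y = 2 then x else 1)"

definition times4 :: "nat \<Rightarrow> nat \<Rightarrow> nat" where
  "times4 x y = (if x = 2 then 2 else if x = 4 then 4 else if y = 1 \<or> y = 3 then 1 else 4)"

definition pplus :: "'i set \<Rightarrow> ('i \<Rightarrow> nat) \<Rightarrow> ('i \<Rightarrow> nat) \<Rightarrow> ('i \<Rightarrow> nat)" where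
  "pplus I f g = (\<lambda>i. if i \<in> I then plus4 (f i) (g i) else undefined)"

definition ptimes :: "'i set \<Rightarrow> ('i \<Rightarrow> nat) \<Rightarrow> ('i \<Rightarrow> nat) \<Rightarrow> ('i \<Rightarrow> nat)" where
  "ptimes I f g = (\<lambda>i. if i \<in> I then times4 (f i) (g i) else undefined)"

text \<open>(C,p,m) is a homomorphic image (via h) of a subalgebra B of the direct power S4^I,
  i.e. it lies in HSP(S4) witnessed by the index set I.\<close>
definition hsp_image ::
  "'i set \<Rightarrow> ('i \<Rightarrow> nat) set \<Rightarrow> (('i \<Rightarrow> nat) \<Rightarrow> 'a) \<Rightarrow> 'a set \<Rightarrow> ('a \<Rightarrow> 'a \<Rightarrow> 'a) \<Rightarrow> ('a \<Rightarrow> 'a \<Rightarrow> 'a) \<Rightarrow> bool" where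
  "hsp_image I B h C p m \<longleftrightarrow>
     B \<subseteq> (PiE I (\<lambda>_. S4)) \<and>
     (\<forall>f\<in>B. \<forall>g\<in>B. pplus I f g \<in> B \<and> ptimes I f g \<in> B) \<and>
     h ` B = C \<and>
     (\<forall>f\<in>B. \<forall>g\<in>B. h (pplus I f g) = p (h f) (h g) \<and> h (ptimes I f g) = m (h f) (h g))"

end

theory Submission
  imports Defs
begin


lemma ais_S4: "ai_semiring S4 plus4 times4"
  unfolding ai_semiring_def S4_def plus4_def times4_def by simp

lemma sig_S4: "sat_Sigma S4 plus4 times4"
  unfolding sat_Sigma_def S4_def plus4_def times4_def by simp

datatype 'a trm = Var 'a | Pl "'a trm" "'a trm" | Ml "'a trm" "'a trm"

fun ev :: "('b \<Rightarrow> 'b \<Rightarrow> 'b) \<Rightarrow> ('b \<Rightarrow> 'b \<Rightarrow> 'b) \<Rightarrow> ('a \<Rightarrow> 'b) \<Rightarrow> 'a trm \<Rightarrow> 'b" where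
  "ev p m \<phi> (Var x) = \<phi> x"
| "ev p m \<phi> (Pl s t) = p (ev p m \<phi> s) (ev p m \<phi> t)"
| "ev p m \<phi> (Ml s t) = m (ev p m \<phi> s) (ev p m \<phi> t)"

fun vars :: "'a trm \<Rightarrow> 'a set" where
  "vars (Var x) = {x}"
| "vars (Pl s t) = vars s \<union> vars t"
| "vars (Ml s t) = vars s \<union> vars t"

fun mons :: "'a trm \<Rightarrow> ('a \<times> 'a list) list" where
  "mons (Var x) = [(x, [])]"
| "mons (Pl s t) = mons s @ mons t"
| "mons (Ml s t) = concat (map (\<lambda>(x,L). map (\<lambda>(y,L'). (x, L @ y # L')) (mons t)) (mons s))"

fun ps :: "('b \<Rightarrow> 'b \<Rightarrow> 'b) \<Rightarrow> 'b list \<Rightarrow> 'b" where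
  "ps p [] = undefined"
| "ps p [a] = a"
| "ps p (a # b # xs) = p a (ps p (b # xs))"

lemma ps_Cons: "xs \<noteq> [] \<Longrightarrow> ps p (a # xs) = p a (ps p xs)"
  by (cases xs) auto

definition monv :: "('b \<Rightarrow> 'b \<Rightarrow> 'b) \<Rightarrow> ('a \<Rightarrow> 'b) \<Rightarrow> 'a \<times> 'a list \<Rightarrow> 'b" where
  "monv m \<phi> mo = foldl m (\<phi> (fst mo)) (map \<phi> (snd mo))"

lemma mons_ne: "mons t \<noteq> []"
  by (induction t) (auto simp: neq_Nil_conv split: prod.split)

lemma mons_vars: "mo \<in> set (mons t) \<Longrightarrow> fst mo \<in> vars t \<and> set (snd mo) \<subseteq> vars t"
  by (induction t arbitrary: mo) (auto, blast+)

locale ais =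
  fixes C :: "'b set" and p m :: "'b \<Rightarrow> 'b \<Rightarrow> 'b"
  assumes ais: "ai_semiring C p m"
begin

lemma cl_p: "x \<in> C \<Longrightarrow> y \<in> C \<Longrightarrow> p x y \<in> C" using ais unfolding ai_semiring_def by blast
lemma cl_m: "x \<in> C \<Longrightarrow> y \<in> C \<Longrightarrow> m x y \<in> C" using ais unfolding ai_semiring_def by blast
lemma idem: "x \<in> C \<Longrightarrow> p x x = x" using ais unfolding ai_semiring_def by blast
lemma comm: "x \<in> C \<Longrightarrow> y \<in> C \<Longrightarrow> p x y = p y x" using ais unfolding ai_semiring_def by blast
lemma passoc: "x \<in> C \<Longrightarrow> y \<in> C \<Longrightarrow> z \<in> C \<Longrightarrow> p (p x y) z = p x (p y z)"
  using ais unfolding ai_semiring_def by blast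
lemma massoc: "x \<in> C \<Longrightarrow> y \<in> C \<Longrightarrow> z \<in> C \<Longrightarrow> m (m x y) z = m x (m y z)"
  using ais unfolding ai_semiring_def by blast
lemma distl: "x \<in> C \<Longrightarrow> y \<in> C \<Longrightarrow> z \<in> C \<Longrightarrow> m x (p y z) = p (m x y) (m x z)"
  using ais unfolding ai_semiring_def by blast
lemma distr: "x \<in> C \<Longrightarrow> y \<in> C \<Longrightarrow> z \<in> C \<Longrightarrow> m (p x y) z = p (m x z) (m y z)"
  using ais unfolding ai_semiring_def by blast

lemma foldl_cl: "a \<in> C \<Longrightarrow> set L \<subseteq> C \<Longrightarrow> foldl m a L \<in> C"
  by (induction L arbitrary: a) (auto simp: cl_m)

lemma foldl_assoc: "a \<in> C \<Longrightarrow> b \<in> C \<Longrightarrow> set L \<subseteq> C \<Longrightarrow> m a (foldl m b L) = foldl m (m a b) L"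
  by (induction L arbitrary: b) (auto simp: cl_m massoc)

lemma ps_cl: "xs \<noteq> [] \<Longrightarrow> set xs \<subseteq> C \<Longrightarrow> ps p xs \<in> C"
proof (induction xs)
  case (Cons a xs) then show ?case by (cases "xs = []") (auto simp: cl_p ps_Cons)
qed simp

lemma ps_app: "xs \<noteq> [] \<Longrightarrow> ys \<noteq> [] \<Longrightarrow> set xs \<subseteq> C \<Longrightarrow> set ys \<subseteq> C
   \<Longrightarrow> ps p (xs @ ys) = p (ps p xs) (ps p ys)"
proof (induction xs)
  case Nil then show ?case by simp
next
  case (Cons a xs)
  show ?case
  proof (cases "xs = []")
    case True then show ?thesis using Cons by (simp add: ps_Cons)
  next
    case False
    then show ?thesis using Cons by (simp add: ps_Cons passoc ps_cl)
  qed
qed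

lemma ps_mr: "xs \<noteq> [] \<Longrightarrow> set xs \<subseteq> C \<Longrightarrow> c \<in> C \<Longrightarrow> m (ps p xs) c = ps p (map (\<lambda>a. m a c) xs)"
proof (induction xs)
  case Nil then show ?case by simp
next
  case (Cons a xs)
  then show ?case by (cases "xs = []") (simp_all add: ps_Cons distr ps_cl)
qed

lemma ps_ml: "xs \<noteq> [] \<Longrightarrow> set xs \<subseteq> C \<Longrightarrow> c \<in> C \<Longrightarrow> m c (ps p xs) = ps p (map (m c) xs)"
proof (induction xs)
  case Nil then show ?case by simp
next
  case (Cons a xs)
  then show ?case by (cases "xs = []") (simp_all add: ps_Cons distl ps_cl)
qed

lemma ps_concat: "xss \<noteq> [] \<Longrightarrow> \<forall>xs\<in>set xss. xs \<noteq> [] \<and> set xs \<subseteq> C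
   \<Longrightarrow> ps p (concat xss) = ps p (map (ps p) xss)"
proof (induction xss)
  case Nil then show ?case by simp
next
  case (Cons xs xss)
  show ?case
  proof (cases "xss = []")
    case True then show ?thesis by simp
  next
    case False
    then have ne: "concat xss \<noteq> []" using Cons.prems by (cases xss) auto
    have "ps p (concat (xs # xss)) = p (ps p xs) (ps p (concat xss))"
      using Cons.prems ne by (subst concat.simps, subst ps_app) auto
    also have "\<dots> = p (ps p xs) (ps p (map (ps p) xss))" using Cons False by simp
    also have "\<dots> = ps p (map (ps p) (xs # xss))" using False by (simp add: ps_Cons)
    finally show ?thesis .
  qed
qed

lemma ps_prod: "xs \<noteq> [] \<Longrightarrow> ys \<noteq> [] \<Longrightarrow> set xs \<subseteq> C \<Longrightarrow> set ys \<subseteq> C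
  \<Longrightarrow> m (ps p xs) (ps p ys) = ps p (concat (map (\<lambda>a. map (m a) ys) xs))"
proof -
  assume a: "xs \<noteq> []" "ys \<noteq> []" "set xs \<subseteq> C" "set ys \<subseteq> C"
  have "m (ps p xs) (ps p ys) = ps p (map (\<lambda>a. m a (ps p ys)) xs)"
    using a by (simp add: ps_mr ps_cl)
  also have "\<dots> = ps p (map (\<lambda>a. ps p (map (m a) ys)) xs)"
    using a by (intro arg_cong[where f="ps p"] map_cong) (auto simp: ps_ml)
  also have "\<dots> = ps p (map (ps p) (map (\<lambda>a. map (m a) ys) xs))" by (simp add: comp_def)
  also have "\<dots> = ps p (concat (map (\<lambda>a. map (m a) ys) xs))"
    using a by (subst ps_concat) (force intro: cl_m)+
  finally show ?thesis .
qed

lemma monv_cl: "\<forall>x\<in>vars t. \<phi> x \<in> C \<Longrightarrow> mo \<in> set (mons t) \<Longrightarrow> monv m \<phi> mo \<in> C"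
  using mons_vars[of mo t] unfolding monv_def by (force intro!: foldl_cl)

lemma monv_app: "\<phi> x \<in> C \<Longrightarrow> \<phi> y \<in> C \<Longrightarrow> \<phi> ` set L \<subseteq> C \<Longrightarrow> \<phi> ` set L' \<subseteq> C \<Longrightarrow>
  monv m \<phi> (x, L @ y # L') = m (monv m \<phi> (x, L)) (monv m \<phi> (y, L'))"
  unfolding monv_def by (simp add: foldl_assoc foldl_cl)

lemma ev_cl: "\<forall>x\<in>vars t. \<phi> x \<in> C \<Longrightarrow> ev p m \<phi> t \<in> C"
  by (induction t) (auto simp: cl_p cl_m)

lemma ev_mons: "\<forall>x\<in>vars t. \<phi> x \<in> C \<Longrightarrow> ev p m \<phi> t = ps p (map (monv m \<phi>) (mons t))"
proof (induction t)
  case (Var x) then show ?case by (simp add: monv_def)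
next
  case (Pl s t)
  then show ?case using mons_ne[of s] mons_ne[of t] monv_cl[of s \<phi>] monv_cl[of t \<phi>]
    by (simp, subst ps_app) auto
next
  case (Ml s t)
  have hs: "\<forall>x\<in>vars s. \<phi> x \<in> C" and ht: "\<forall>x\<in>vars t. \<phi> x \<in> C" using Ml.prems by auto
  have "ev p m \<phi> (Ml s t) = m (ps p (map (monv m \<phi>) (mons s))) (ps p (map (monv m \<phi>) (mons t)))"
    using Ml hs ht by simp
  also have "\<dots> = ps p (concat (map (\<lambda>a. map (m a) (map (monv m \<phi>) (mons t))) (map (monv m \<phi>) (mons s))))"
    using mons_ne[of s] mons_ne[of t] monv_cl[OF hs] monv_cl[OF ht] by (subst ps_prod) auto
  also have "concat (map (\<lambda>a. map (m a) (map (monv m \<phi>) (mons t))) (map (monv m \<phi>) (mons s)))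
      = map (monv m \<phi>) (mons (Ml s t))"
  proof -
    have "map (monv m \<phi>) (mons (Ml s t)) =
       concat (map (\<lambda>mo. map (monv m \<phi>) (map (\<lambda>(y,L'). (fst mo, snd mo @ y # L')) (mons t))) (mons s))"
      by (simp add: map_concat case_prod_beta comp_def)
    also have "\<dots> = concat (map (\<lambda>mo. map (m (monv m \<phi> mo)) (map (monv m \<phi>) (mons t))) (mons s))"
    proof (intro arg_cong[where f=concat] map_cong refl)
      fix mo assume mo: "mo \<in> set (mons s)"
      show "map (monv m \<phi>) (map (\<lambda>(y,L'). (fst mo, snd mo @ y # L')) (mons t))
          = map (m (monv m \<phi> mo)) (map (monv m \<phi>) (mons t))"
        unfolding map_map
      proof (rule map_cong[OF refl])
        fix mo' assume mo': "mo' \<in> set (mons t)"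
        obtain x L where xL: "mo = (x, L)" by (cases mo)
        obtain y L' where yL: "mo' = (y, L')" by (cases mo')
        have "x \<in> vars s" "set L \<subseteq> vars s" using mons_vars[OF mo] xL by auto
        moreover have "y \<in> vars t" "set L' \<subseteq> vars t" using mons_vars[OF mo'] yL by auto
        ultimately have "monv m \<phi> (x, L @ y # L') = m (monv m \<phi> (x,L)) (monv m \<phi> (y,L'))"
          using hs ht by (intro monv_app) auto
        then show "(monv m \<phi> \<circ> (\<lambda>(y, L'). (fst mo, snd mo @ y # L'))) mo' = (m (monv m \<phi> mo) \<circ> monv m \<phi>) mo'"
          using xL yL by simp
      qed
    qed
    finally show ?thesis by (simp add: comp_def)
  qed
  finally show ?case .
qed

lemma le_p1: "a \<in> C \<Longrightarrow> b \<in> C \<Longrightarrow> p a (p a b) = p a b"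
  using passoc[of a a b] idem[of a] by simp
lemma lub: "a \<in> C \<Longrightarrow> b \<in> C \<Longrightarrow> u \<in> C \<Longrightarrow> p a u = u \<Longrightarrow> p b u = u \<Longrightarrow> p (p a b) u = u"
  using passoc[of a b u] by simp
lemma le_trans: "a \<in> C \<Longrightarrow> b \<in> C \<Longrightarrow> c \<in> C \<Longrightarrow> p a b = b \<Longrightarrow> p b c = c \<Longrightarrow> p a c = c"
  using passoc[of a b c] by simp
lemma le_antisym: "a \<in> C \<Longrightarrow> b \<in> C \<Longrightarrow> p a b = b \<Longrightarrow> p b a = a \<Longrightarrow> a = b"
  using comm[of a b] by simp

lemma ps_ub: "a \<in> set xs \<Longrightarrow> set xs \<subseteq> C \<Longrightarrow> p a (ps p xs) = ps p xs"
proof (induction xs)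
  case Nil then show ?case by simp
next
  case (Cons b xs)
  show ?case
  proof (cases "xs = []")
    case True then show ?thesis using Cons by (simp add: idem)
  next
    case False
    have pc: "ps p xs \<in> C" using False Cons.prems by (simp add: ps_cl)
    show ?thesis
    proof (cases "a = b")
      case True then show ?thesis using False Cons.prems pc by (simp add: ps_Cons le_p1)
    next
      case ne: False
      then have "p a (ps p xs) = ps p xs" using Cons by auto
      have bC: "b \<in> C" and aC: "a \<in> C" using Cons.prems by auto
      have "p a (p b (ps p xs)) = p (p a b) (ps p xs)" using passoc[OF aC bC pc] by simp
      also have "\<dots> = p (p b a) (ps p xs)" using comm[OF aC bC] by simp
      also have "\<dots> = p b (p a (ps p xs))" using passoc[OF bC aC pc] by simp
      also have "\<dots> = p b (ps p xs)" using \<open>p a (ps p xs) = ps p xs\<close> by simp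
      finally show ?thesis using False by (simp add: ps_Cons)
    qed
  qed
qed

lemma ps_lub: "xs \<noteq> [] \<Longrightarrow> set xs \<subseteq> C \<Longrightarrow> u \<in> C \<Longrightarrow> \<forall>a\<in>set xs. p a u = u \<Longrightarrow> p (ps p xs) u = u"
proof (induction xs)
  case Nil then show ?case by simp
next
  case (Cons b xs)
  then show ?case by (cases "xs = []") (auto simp: ps_Cons lub ps_cl)
qed

end

interpretation S4a: ais S4 plus4 times4 using ais_S4 by (simp add: ais_def)


locale sig = ais +
  assumes sg: "sat_Sigma C p m"
begin

lemma I1: "x \<in> C \<Longrightarrow> y \<in> C \<Longrightarrow> m (m x x) y = m x y" using sg unfolding sat_Sigma_def by blast
lemma I2: "x \<in> C \<Longrightarrow> y \<in> C \<Longrightarrow> m x (m y y) = m x y" using sg unfolding sat_Sigma_def by blast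
lemma I3: "x \<in> C \<Longrightarrow> y \<in> C \<Longrightarrow> z \<in> C \<Longrightarrow> m (m x y) z = m (m x z) y"
  using sg unfolding sat_Sigma_def by blast
lemma I4: "x \<in> C \<Longrightarrow> p x (m x x) = m x x"
proof -
  assume x: "x \<in> C"
  have "m x x = p (m x x) x" using sg x unfolding sat_Sigma_def by blast
  then show ?thesis using comm[of x "m x x"] x cl_m by simp
qed
lemma I5: "x \<in> C \<Longrightarrow> y \<in> C \<Longrightarrow> z \<in> C \<Longrightarrow> p (m (m x y) z) (m x y) = m x y"
proof -
  assume a: "x \<in> C" "y \<in> C" "z \<in> C"
  have "m x y = p (m x y) (m (m x y) z)" using sg a unfolding sat_Sigma_def by blast
  then show ?thesis using comm[of "m x y" "m (m x y) z"] a cl_m by simp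
qed
lemma I6: "x \<in> C \<Longrightarrow> y \<in> C \<Longrightarrow> z \<in> C \<Longrightarrow> p (m y x) (p x (m y z)) = p x (m y z)"
proof -
  assume a: "x \<in> C" "y \<in> C" "z \<in> C"
  have "p x (m y z) = p (p x (m y z)) (m y x)" using sg a unfolding sat_Sigma_def by blast
  then show ?thesis using comm[of "m y x" "p x (m y z)"] a cl_m cl_p by simp
qed

lemma F1: "w \<in> C \<Longrightarrow> a \<in> C \<Longrightarrow> set L \<subseteq> C \<Longrightarrow> foldl m (m w a) L = m (foldl m w L) a"
proof (induction L arbitrary: w)
  case Nil then show ?case by simp
next
  case (Cons l L)
  have "foldl m (m w a) (l # L) = foldl m (m (m w l) a) L" using Cons.prems by (simp add: I3)
  also have "\<dots> = m (foldl m (m w l) L) a" using Cons by (simp add: cl_m)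
  finally show ?case by simp
qed

lemma F6: "u \<in> C \<Longrightarrow> set A \<subseteq> C \<Longrightarrow> set B \<subseteq> C \<Longrightarrow>
   foldl m (foldl m u A) B = foldl m (foldl m u B) A"
proof (induction B arbitrary: u)
  case Nil then show ?case by simp
next
  case (Cons b B)
  have "foldl m (foldl m u A) (b # B) = foldl m (m (foldl m u A) b) B" by simp
  also have "\<dots> = foldl m (foldl m (m u b) A) B" using Cons.prems by (simp add: F1)
  also have "\<dots> = foldl m (foldl m (m u b) B) A" using Cons by (simp add: cl_m)
  finally show ?case by simp
qed

lemma F2: "u \<in> C \<Longrightarrow> set L \<subseteq> C \<Longrightarrow> a \<in> set L \<Longrightarrow> m (foldl m u L) a = foldl m u L"
proof -
  assume a: "u \<in> C" "set L \<subseteq> C" "a \<in> set L"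
  then obtain L1 L2 where L: "L = L1 @ a # L2" by (meson split_list)
  let ?X = "foldl m u L1"
  have X: "?X \<in> C" and aC: "a \<in> C" and L2: "set L2 \<subseteq> C" using a L by (auto intro!: foldl_cl)
  have "m (foldl m u L) a = m (foldl m (m ?X a) L2) a" using L by simp
  also have "\<dots> = foldl m (m (m ?X a) a) L2" using X aC L2 by (simp add: F1 cl_m)
  also have "m (m ?X a) a = m ?X a" using X aC by (simp add: massoc I2)
  finally show ?thesis using L by simp
qed

lemma F4: "u \<in> C \<Longrightarrow> set L1 \<subseteq> C \<Longrightarrow> set L2 \<subseteq> set L1 \<Longrightarrow> foldl m (foldl m u L1) L2 = foldl m u L1"
proof (induction L2)
  case Nil then show ?case by simp
next
  case (Cons b L2)
  then show ?case by (simp add: F2)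
qed

lemma G: "X \<in> C \<Longrightarrow> c \<in> C \<Longrightarrow> set L \<subseteq> C \<Longrightarrow> p (foldl m (m X c) L) (m X c) = m X c"
proof (induction L arbitrary: X c)
  case Nil then show ?case by (simp add: idem cl_m)
next
  case (Cons l L)
  have h1: "p (foldl m (m (m X c) l) L) (m (m X c) l) = m (m X c) l" using Cons by (simp add: cl_m)
  have h2: "p (m (m X c) l) (m X c) = m X c" using Cons.prems by (simp add: I5)
  have c: "foldl m (m (m X c) l) L \<in> C" "m (m X c) l \<in> C" "m X c \<in> C"
    using Cons.prems by (auto simp: cl_m intro!: foldl_cl)
  show ?case using le_trans[OF c h1 h2] by simp
qed

lemma F5: "u \<in> C \<Longrightarrow> set L1 \<subseteq> C \<Longrightarrow> L2 \<noteq> [] \<Longrightarrow> set L2 \<subseteq> set L1 \<Longrightarrow>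
   p (foldl m u L1) (foldl m u L2) = foldl m u L2"
proof -
  assume a: "u \<in> C" "set L1 \<subseteq> C" "L2 \<noteq> []" "set L2 \<subseteq> set L1"
  have L2C: "set L2 \<subseteq> C" using a by auto
  have "foldl m u L1 = foldl m (foldl m u L1) L2" using a by (simp add: F4)
  also have "\<dots> = foldl m (foldl m u L2) L1" using a L2C by (simp add: F6)
  finally have e: "foldl m u L1 = foldl m (foldl m u L2) L1" .
  obtain L0 c where L0: "L2 = L0 @ [c]" using a(3) by (cases L2 rule: rev_cases) auto
  have "c \<in> C" "set L0 \<subseteq> C" using L2C L0 by auto
  then have "p (foldl m (m (foldl m u L0) c) L1) (m (foldl m u L0) c) = m (foldl m u L0) c"
    using a by (intro G) (auto intro!: foldl_cl)
  then show ?thesis using e L0 by simp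
qed

lemma E: "x \<in> C \<Longrightarrow> set L \<subseteq> C \<Longrightarrow> L \<noteq> [] \<Longrightarrow> foldl m x (x # L) = foldl m x L"
  by (cases L) (auto simp: I1)

lemma absorb:
  assumes MC: "\<forall>mo\<in>set M. fst mo \<in> C \<and> set (snd mo) \<subseteq> C" and Mne: "M \<noteq> []"
    and xC: "x \<in> C" and LC: "set L \<subseteq> C"
    and c1: "\<exists>(y,T)\<in>set M. insert y (set T) \<subseteq> insert x (set L)"
    and c3: "L \<noteq> [] \<longrightarrow> (\<exists>S'. (x, S') \<in> set M \<and> S' \<noteq> [])"
  shows "p (foldl m x L) (ps p (map (monv m id) M)) = ps p (map (monv m id) M)"
proof -
  let ?S = "ps p (map (monv m id) M)"
  have mv: "monv m id mo = foldl m (fst mo) (snd mo)" for mo by (simp add: monv_def)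
  have setC: "set (map (monv m id) M) \<subseteq> C" using MC by (auto simp: mv intro!: foldl_cl)
  have SC: "?S \<in> C" using setC Mne by (simp add: ps_cl)
  have mem: "p (foldl m y T) ?S = ?S" if "(y, T) \<in> set M" for y T
  proof -
    have "monv m id (y,T) \<in> set (map (monv m id) M)" using that by force
    then show ?thesis using ps_ub[OF _ setC] by (simp add: mv)
  qed
  obtain y T where yT: "(y,T) \<in> set M" and sub: "insert y (set T) \<subseteq> insert x (set L)" using c1 by auto
  have yC: "y \<in> C" and TC: "set T \<subseteq> C" using MC yT by fastforce+
  show ?thesis
  proof (cases "L = []")
    case True
    then have yx: "y = x" and Tx: "set T \<subseteq> {x}" using sub by auto
    show ?thesis
    proof (cases "T = []")
      case True then show ?thesis using mem[OF yT] yx \<open>L = []\<close> by simp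
    next
      case False
      then have sT: "set T = set [x]" using Tx by (cases T) auto
      have "p (foldl m x T) (foldl m x [x]) = foldl m x [x]" using xC TC False sT by (intro F5) auto
      moreover have "p (foldl m x [x]) (foldl m x T) = foldl m x T" using xC TC False sT by (intro F5) auto
      moreover have "foldl m x T \<in> C" "foldl m x [x] \<in> C" using xC TC by (auto intro!: foldl_cl simp: cl_m)
      ultimately have "foldl m x T = foldl m x [x]" using le_antisym by blast
      then have eq: "foldl m x T = m x x" by simp
      have h1: "p x (m x x) = m x x" using xC by (simp add: I4)
      have h2: "p (m x x) ?S = ?S" using mem[OF yT] yx eq by simp
      show ?thesis using le_trans[OF xC cl_m[OF xC xC] SC h1 h2] \<open>L = []\<close> by simp
    qed
  next
    case False
    obtain S' where xS: "(x, S') \<in> set M" and S'ne: "S' \<noteq> []" using c3 False by auto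
    obtain s S'' where S': "S' = s # S''" using S'ne by (cases S') auto
    have sC: "s \<in> C" and S''C: "set S'' \<subseteq> C" using MC xS S' by fastforce+
    let ?w = "foldl m s S''"
    have wC: "?w \<in> C" using sC S''C by (simp add: foldl_cl)
    have FyC: "foldl m y T \<in> C" using yC TC by (simp add: foldl_cl)
    have e1: "foldl m x L = foldl m x (x # L)" using E[OF xC LC False] by simp
    have e2: "p (foldl m x (x # L)) (foldl m x (y # T)) = foldl m x (y # T)"
      using xC LC sub yC TC by (intro F5) auto
    have e3: "foldl m x (y # T) = m x (foldl m y T)" using xC yC TC by (simp add: foldl_assoc)
    have e4: "foldl m x S' = m x ?w" using S' xC sC S''C by (simp add: foldl_assoc)
    have e5: "p (m x (foldl m y T)) (p (foldl m y T) (m x ?w)) = p (foldl m y T) (m x ?w)"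
      using I6[OF FyC xC wC] .
    have e6: "p (p (foldl m y T) (m x ?w)) ?S = ?S"
      using lub[OF FyC cl_m[OF xC wC] SC] mem[OF yT] mem[OF xS] e4 by simp
    have c: "foldl m x (x # L) \<in> C" "foldl m x (y # T) \<in> C" using xC LC yC TC by (auto intro!: foldl_cl simp: cl_m)
    have pc: "p (foldl m y T) (m x ?w) \<in> C" using FyC xC wC by (simp add: cl_m cl_p)
    have "p (foldl m x (y # T)) ?S = ?S"
      using le_trans[OF _ pc SC e5 e6] e3 c by simp
    then have "p (foldl m x (x # L)) ?S = ?S"
      using le_trans[OF c SC e2] by simp
    then show ?thesis using e1 by simp
  qed
qed

end


interpretation S4s: sig S4 plus4 times4
  by (simp add: sig_def sig_axioms_def ais_def ais_S4 sig_S4)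

definition isA :: "nat \<Rightarrow> bool" where "isA v \<longleftrightarrow> v = 1 \<or> v = 3"
definition isB :: "nat \<Rightarrow> bool" where "isB v \<longleftrightarrow> v = 1 \<or> v = 4"

lemma S4A_p: "a \<in> S4 \<Longrightarrow> b \<in> S4 \<Longrightarrow> (isA (plus4 a b)) = (isA a \<or> isA b)"
  by (auto simp: S4_def plus4_def isA_def isB_def)
lemma S4A_t: "a \<in> S4 \<Longrightarrow> b \<in> S4 \<Longrightarrow> (isA (times4 a b)) = (isA a \<and> isA b)"
  by (auto simp: S4_def times4_def isA_def isB_def)
lemma S4B_p: "a \<in> S4 \<Longrightarrow> b \<in> S4 \<Longrightarrow> (isB (plus4 a b)) = (isB a \<or> isB b)"
  by (auto simp: S4_def plus4_def isA_def isB_def)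
lemma S4B_t: "a \<in> S4 \<Longrightarrow> b \<in> S4 \<Longrightarrow> (isB (times4 a b)) = (a \<noteq> 2)"
  by (auto simp: S4_def times4_def isA_def isB_def)
lemma S4_t2: "a \<in> S4 \<Longrightarrow> b \<in> S4 \<Longrightarrow> (times4 a b = 2) = (a = 2)"
  by (auto simp: S4_def times4_def isA_def isB_def)

lemma ps_or:
  assumes Q: "\<And>a b. a \<in> S4 \<Longrightarrow> b \<in> S4 \<Longrightarrow> Q (plus4 a b) = (Q a \<or> Q b)"
  shows "xs \<noteq> [] \<Longrightarrow> set xs \<subseteq> S4 \<Longrightarrow> Q (ps plus4 xs) = (\<exists>v\<in>set xs. Q v)"
proof (induction xs)
  case Nil then show ?case by simp
next
  case (Cons a xs)
  show ?case
  proof (cases "xs = []")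
    case True then show ?thesis by simp
  next
    case False
    then have "ps plus4 xs \<in> S4" using Cons.prems by (simp add: S4a.ps_cl)
    then show ?thesis using False Cons by (simp add: ps_Cons Q)
  qed
qed

lemma foldlA: "v \<in> S4 \<Longrightarrow> set L \<subseteq> S4 \<Longrightarrow>
   (isA (foldl times4 v L)) = (isA v \<and> (\<forall>l\<in>set L. isA l))"
proof (induction L arbitrary: v)
  case Nil then show ?case by simp
next
  case (Cons l L)
  have "times4 v l \<in> S4" using Cons.prems by (simp add: S4a.cl_m)
  then show ?case using Cons by (simp add: S4A_t)
qed

lemma foldl2: "v \<in> S4 \<Longrightarrow> set L \<subseteq> S4 \<Longrightarrow> (foldl times4 v L = 2) = (v = 2)"
proof (induction L arbitrary: v)
  case Nil then show ?case by simp
next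
  case (Cons l L)
  have "times4 v l \<in> S4" using Cons.prems by (simp add: S4a.cl_m)
  then show ?case using Cons by (simp add: S4_t2)
qed

lemma foldlB: "L \<noteq> [] \<Longrightarrow> v \<in> S4 \<Longrightarrow> set L \<subseteq> S4 \<Longrightarrow> (isB (foldl times4 v L)) = (v \<noteq> 2)"
proof -
  assume a: "L \<noteq> []" "v \<in> S4" "set L \<subseteq> S4"
  obtain L0 c where L: "L = L0 @ [c]" using a(1) by (cases L rule: rev_cases) auto
  have "foldl times4 v L0 \<in> S4" "c \<in> S4" "set L0 \<subseteq> S4" using a L by (auto intro!: S4a.foldl_cl)
  then show ?thesis using L a by (simp add: S4B_t foldl2)
qed

lemma monvA: "\<forall>z. \<phi> z \<in> {2,3} \<Longrightarrow>
   (isA (monv times4 \<phi> mo)) = (\<phi> (fst mo) = 3 \<and> (\<forall>l\<in>set (snd mo). \<phi> l = 3))"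
proof -
  assume r: "\<forall>z. \<phi> z \<in> {2,3}"
  then have rS: "\<phi> z \<in> S4" for z by (auto simp: S4_def)
  have e: "isA (\<phi> z) = (\<phi> z = 3)" for z using r[rule_format, of z] by (auto simp: isA_def)
  show ?thesis unfolding monv_def using rS
    by (subst foldlA) (auto simp: e)
qed

lemma monvB: "\<forall>z. \<phi> z \<in> {2,3} \<Longrightarrow>
   (isB (monv times4 \<phi> mo)) = (snd mo \<noteq> [] \<and> \<phi> (fst mo) = 3)"
proof -
  assume r: "\<forall>z. \<phi> z \<in> {2,3}"
  then have rS: "\<phi> z \<in> S4" for z by (auto simp: S4_def)
  have e: "(\<phi> z \<noteq> 2) = (\<phi> z = 3)" for z using r[rule_format, of z] by auto
  have e2: "\<not> isB (\<phi> z)" for z using r[rule_format, of z] by (auto simp: isB_def)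
  show ?thesis
  proof (cases "snd mo = []")
    case True then show ?thesis unfolding monv_def using e2 by simp
  next
    case False then show ?thesis unfolding monv_def using rS
      by (subst foldlB) (auto simp: e)
  qed
qed

lemma ev4_mons: "\<forall>z. \<phi> z \<in> {2,3} \<Longrightarrow> ev plus4 times4 \<phi> t = ps plus4 (map (monv times4 \<phi>) (mons t))
   \<and> set (map (monv times4 \<phi>) (mons t)) \<subseteq> S4"
proof -
  assume r: "\<forall>z. \<phi> z \<in> {2,3}"
  then have rS: "\<forall>x\<in>vars t. \<phi> x \<in> S4" by (auto simp: S4_def)
  show ?thesis using S4a.ev_mons[OF rS] S4a.monv_cl[OF rS] by auto
qed

lemma evA: "\<forall>z. \<phi> z \<in> {2,3} \<Longrightarrow> (isA (ev plus4 times4 \<phi> t)) =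
   (\<exists>mo\<in>set (mons t). \<phi> (fst mo) = 3 \<and> (\<forall>l\<in>set (snd mo). \<phi> l = 3))"
proof -
  assume r: "\<forall>z. \<phi> z \<in> {2,3}"
  have "(isA (ev plus4 times4 \<phi> t)) = (\<exists>v\<in>set (map (monv times4 \<phi>) (mons t)). isA v)"
    using ev4_mons[OF r, of t] mons_ne[of t] by (simp only:) (rule ps_or[of isA, OF S4A_p], auto)
  then show ?thesis using monvA[OF r] by simp
qed

lemma evB: "\<forall>z. \<phi> z \<in> {2,3} \<Longrightarrow> (isB (ev plus4 times4 \<phi> t)) =
   (\<exists>mo\<in>set (mons t). snd mo \<noteq> [] \<and> \<phi> (fst mo) = 3)"
proof -
  assume r: "\<forall>z. \<phi> z \<in> {2,3}"
  have "(isB (ev plus4 times4 \<phi> t)) = (\<exists>v\<in>set (map (monv times4 \<phi>) (mons t)). isB v)"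
    using ev4_mons[OF r, of t] mons_ne[of t] by (simp only:) (rule ps_or[of isB, OF S4B_p], auto)
  then show ?thesis using monvB[OF r] by simp
qed

context sig
begin

lemma half:
  assumes vs: "vars s \<subseteq> C" "vars t \<subseteq> C"
    and h: "\<forall>\<phi>. (\<forall>z\<in>C. \<phi> z \<in> S4) \<longrightarrow> ev plus4 times4 \<phi> s = ev plus4 times4 \<phi> t"
  shows "p (ev p m id t) (ev p m id s) = ev p m id s"
proof -
  have es: "ev p m id s = ps p (map (monv m id) (mons s))" using vs by (intro ev_mons) auto
  have et: "ev p m id t = ps p (map (monv m id) (mons t))" using vs by (intro ev_mons) auto
  have MC: "\<forall>mo\<in>set (mons s). fst mo \<in> C \<and> set (snd mo) \<subseteq> C" using mons_vars vs by blast
  have sC: "ev p m id s \<in> C" using vs by (intro ev_cl) auto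
  have vt: "\<forall>x\<in>vars t. id x \<in> C" using vs by auto
  have tl: "set (map (monv m id) (mons t)) \<subseteq> C" using monv_cl[OF vt] by (auto simp del: id_apply)
  have all: "\<forall>a\<in>set (map (monv m id) (mons t)). p a (ev p m id s) = ev p m id s"
  proof
    fix a assume "a \<in> set (map (monv m id) (mons t))"
    then obtain x L where xL: "(x,L) \<in> set (mons t)" and a: "a = monv m id (x,L)" by auto
    have xC: "x \<in> C" and LC: "set L \<subseteq> C" using mons_vars[OF xL] vs by auto
    define \<phi>1 where "\<phi>1 = (\<lambda>z. if z \<in> insert x (set L) then 3 else (2::nat))"
    have r1: "\<forall>z. \<phi>1 z \<in> {2,3}" by (simp add: \<phi>1_def)
    have J1: "\<forall>z\<in>C. \<phi>1 z \<in> S4" by (simp add: \<phi>1_def S4_def)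
    have "isA (ev plus4 times4 \<phi>1 t)"
      by (subst evA[OF r1]) (rule bexI[OF _ xL], simp add: \<phi>1_def)
    then have "isA (ev plus4 times4 \<phi>1 s)" using h J1 by simp
    then obtain mo where mo: "mo \<in> set (mons s)" "\<phi>1 (fst mo) = 3" "\<forall>l\<in>set (snd mo). \<phi>1 l = 3"
      using evA[OF r1] by blast
    have "insert (fst mo) (set (snd mo)) \<subseteq> insert x (set L)"
      using mo(2,3) unfolding \<phi>1_def by (auto split: if_splits)
    then have c1: "\<exists>(y,T)\<in>set (mons s). insert y (set T) \<subseteq> insert x (set L)"
      using mo(1) by (intro bexI[of _ mo]) (auto simp: case_prod_beta)
    have c3: "L \<noteq> [] \<longrightarrow> (\<exists>S'. (x, S') \<in> set (mons s) \<and> S' \<noteq> [])"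
    proof
      assume Lne: "L \<noteq> []"
      define \<phi>2 where "\<phi>2 = (\<lambda>z. if z = x then 3 else (2::nat))"
      have r2: "\<forall>z. \<phi>2 z \<in> {2,3}" by (simp add: \<phi>2_def)
      have J2: "\<forall>z\<in>C. \<phi>2 z \<in> S4" by (simp add: \<phi>2_def S4_def)
      have "isB (ev plus4 times4 \<phi>2 t)"
        by (subst evB[OF r2]) (rule bexI[OF _ xL], simp add: \<phi>2_def Lne)
      then have "isB (ev plus4 times4 \<phi>2 s)" using h J2 by simp
      then obtain mo where mo: "mo \<in> set (mons s)" "snd mo \<noteq> []" "\<phi>2 (fst mo) = 3"
        using evB[OF r2] by blast
      then have "fst mo = x" unfolding \<phi>2_def by (auto split: if_splits)
      then show "\<exists>S'. (x, S') \<in> set (mons s) \<and> S' \<noteq> []" using mo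
        by (intro exI[of _ "snd mo"]) (metis prod.collapse)
    qed
    have "p (foldl m x L) (ps p (map (monv m id) (mons s))) = ps p (map (monv m id) (mons s))"
      by (rule absorb[OF MC mons_ne xC LC c1 c3])
    then show "p a (ev p m id s) = ev p m id s" using a es by (simp add: monv_def)
  qed
  have ne: "map (monv m id) (mons t) \<noteq> []" using mons_ne[of t] by simp
  show ?thesis using ps_lub[OF ne tl sC all] et by simp
qed

lemma key:
  assumes vs: "vars s \<subseteq> C" "vars t \<subseteq> C"
    and h: "\<forall>\<phi>. (\<forall>z\<in>C. \<phi> z \<in> S4) \<longrightarrow> ev plus4 times4 \<phi> s = ev plus4 times4 \<phi> t"
  shows "ev p m id s = ev p m id t"
proof -
  have h': "\<forall>\<phi>. (\<forall>z\<in>C. \<phi> z \<in> S4) \<longrightarrow> ev plus4 times4 \<phi> t = ev plus4 times4 \<phi> s" using h by simp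
  have 1: "p (ev p m id t) (ev p m id s) = ev p m id s" by (rule half[OF vs h])
  have 2: "p (ev p m id s) (ev p m id t) = ev p m id t" by (rule half[OF vs(2,1) h'])
  have "ev p m id s \<in> C" "ev p m id t \<in> C" using vs by (auto intro!: ev_cl)
  then show ?thesis using le_antisym 1 2 by blast
qed

end


abbreviation "PS I \<equiv> PiE I (\<lambda>_. S4)"

lemma pt1: "a \<in> S4 \<Longrightarrow> plus4 (times4 a a) a = times4 a a"
  by (auto simp: S4_def plus4_def times4_def)
lemma pt2: "a \<in> S4 \<Longrightarrow> b \<in> S4 \<Longrightarrow> c \<in> S4 \<Longrightarrow> plus4 (times4 a b) (times4 (times4 a b) c) = times4 a b"
  by (auto simp: S4_def plus4_def times4_def)
lemma pt3: "a \<in> S4 \<Longrightarrow> b \<in> S4 \<Longrightarrow> c \<in> S4 \<Longrightarrow> plus4 (plus4 a (times4 b c)) (times4 b a) = plus4 a (times4 b c)"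
  by (auto simp: S4_def plus4_def times4_def)

lemma pp_cl: "f \<in> PS I \<Longrightarrow> g \<in> PS I \<Longrightarrow> pplus I f g \<in> PS I"
  by (rule PiE_I) (auto simp: pplus_def intro: S4a.cl_p)
lemma pt_cl: "f \<in> PS I \<Longrightarrow> g \<in> PS I \<Longrightarrow> ptimes I f g \<in> PS I"
  by (rule PiE_I) (auto simp: ptimes_def intro: S4a.cl_m)

lemma lift: assumes "\<And>i. i \<in> I \<Longrightarrow> F i = G i" "\<And>i. i \<notin> I \<Longrightarrow> F i = undefined" "\<And>i. i \<notin> I \<Longrightarrow> G i = undefined"
  shows "F = G"
proof (rule ext)
  fix i show "F i = G i" using assms by (cases "i \<in> I") auto
qed

lemma f_idem: assumes f: "f \<in> PS I"
  shows "pplus I f f = f"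
proof (rule lift)
  fix i assume i: "i \<in> I"
  have "f i \<in> S4" using PiE_mem[OF f i] by auto
  then show "(pplus I f f) i = (f) i" using i by (simp add: pplus_def ptimes_def S4a.idem)
qed (simp_all add: pplus_def ptimes_def PiE_arb[OF f])

lemma f_comm: assumes f: "f \<in> PS I" and g: "g \<in> PS I"
  shows "pplus I f g = pplus I g f"
proof (rule lift)
  fix i assume i: "i \<in> I"
  have "f i \<in> S4" "g i \<in> S4" using PiE_mem[OF f i] PiE_mem[OF g i] by auto
  then show "(pplus I f g) i = (pplus I g f) i" using i by (simp add: pplus_def ptimes_def S4a.comm)
qed (simp_all add: pplus_def ptimes_def PiE_arb[OF f] PiE_arb[OF g])

lemma f_passoc: assumes f: "f \<in> PS I" and g: "g \<in> PS I" and k: "k \<in> PS I"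
  shows "pplus I (pplus I f g) k = pplus I f (pplus I g k)"
proof (rule lift)
  fix i assume i: "i \<in> I"
  have "f i \<in> S4" "g i \<in> S4" "k i \<in> S4" using PiE_mem[OF f i] PiE_mem[OF g i] PiE_mem[OF k i] by auto
  then show "(pplus I (pplus I f g) k) i = (pplus I f (pplus I g k)) i" using i by (simp add: pplus_def ptimes_def S4a.passoc S4a.cl_p)
qed (simp_all add: pplus_def ptimes_def PiE_arb[OF f] PiE_arb[OF g] PiE_arb[OF k])

lemma f_massoc: assumes f: "f \<in> PS I" and g: "g \<in> PS I" and k: "k \<in> PS I"
  shows "ptimes I (ptimes I f g) k = ptimes I f (ptimes I g k)"
proof (rule lift)
  fix i assume i: "i \<in> I"
  have "f i \<in> S4" "g i \<in> S4" "k i \<in> S4" using PiE_mem[OF f i] PiE_mem[OF g i] PiE_mem[OF k i] by auto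
  then show "(ptimes I (ptimes I f g) k) i = (ptimes I f (ptimes I g k)) i" using i by (simp add: pplus_def ptimes_def S4a.massoc S4a.cl_m)
qed (simp_all add: pplus_def ptimes_def PiE_arb[OF f] PiE_arb[OF g] PiE_arb[OF k])

lemma f_distl: assumes f: "f \<in> PS I" and g: "g \<in> PS I" and k: "k \<in> PS I"
  shows "ptimes I f (pplus I g k) = pplus I (ptimes I f g) (ptimes I f k)"
proof (rule lift)
  fix i assume i: "i \<in> I"
  have "f i \<in> S4" "g i \<in> S4" "k i \<in> S4" using PiE_mem[OF f i] PiE_mem[OF g i] PiE_mem[OF k i] by auto
  then show "(ptimes I f (pplus I g k)) i = (pplus I (ptimes I f g) (ptimes I f k)) i" using i by (simp add: pplus_def ptimes_def S4a.distl)
qed (simp_all add: pplus_def ptimes_def PiE_arb[OF f] PiE_arb[OF g] PiE_arb[OF k])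

lemma f_distr: assumes f: "f \<in> PS I" and g: "g \<in> PS I" and k: "k \<in> PS I"
  shows "ptimes I (pplus I f g) k = pplus I (ptimes I f k) (ptimes I g k)"
proof (rule lift)
  fix i assume i: "i \<in> I"
  have "f i \<in> S4" "g i \<in> S4" "k i \<in> S4" using PiE_mem[OF f i] PiE_mem[OF g i] PiE_mem[OF k i] by auto
  then show "(ptimes I (pplus I f g) k) i = (pplus I (ptimes I f k) (ptimes I g k)) i" using i by (simp add: pplus_def ptimes_def S4a.distr)
qed (simp_all add: pplus_def ptimes_def PiE_arb[OF f] PiE_arb[OF g] PiE_arb[OF k])

lemma f_I1: assumes f: "f \<in> PS I" and g: "g \<in> PS I"
  shows "ptimes I (ptimes I f f) g = ptimes I f g"
proof (rule lift)
  fix i assume i: "i \<in> I"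
  have "f i \<in> S4" "g i \<in> S4" using PiE_mem[OF f i] PiE_mem[OF g i] by auto
  then show "(ptimes I (ptimes I f f) g) i = (ptimes I f g) i" using i by (simp add: pplus_def ptimes_def S4s.I1)
qed (simp_all add: pplus_def ptimes_def PiE_arb[OF f] PiE_arb[OF g])

lemma f_I2: assumes f: "f \<in> PS I" and g: "g \<in> PS I"
  shows "ptimes I f (ptimes I g g) = ptimes I f g"
proof (rule lift)
  fix i assume i: "i \<in> I"
  have "f i \<in> S4" "g i \<in> S4" using PiE_mem[OF f i] PiE_mem[OF g i] by auto
  then show "(ptimes I f (ptimes I g g)) i = (ptimes I f g) i" using i by (simp add: pplus_def ptimes_def S4s.I2)
qed (simp_all add: pplus_def ptimes_def PiE_arb[OF f] PiE_arb[OF g])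

lemma f_I3: assumes f: "f \<in> PS I" and g: "g \<in> PS I" and k: "k \<in> PS I"
  shows "ptimes I (ptimes I f g) k = ptimes I (ptimes I f k) g"
proof (rule lift)
  fix i assume i: "i \<in> I"
  have "f i \<in> S4" "g i \<in> S4" "k i \<in> S4" using PiE_mem[OF f i] PiE_mem[OF g i] PiE_mem[OF k i] by auto
  then show "(ptimes I (ptimes I f g) k) i = (ptimes I (ptimes I f k) g) i" using i by (simp add: pplus_def ptimes_def S4s.I3)
qed (simp_all add: pplus_def ptimes_def PiE_arb[OF f] PiE_arb[OF g] PiE_arb[OF k])

lemma f_I4: assumes f: "f \<in> PS I"
  shows "ptimes I f f = pplus I (ptimes I f f) f"
proof (rule lift)
  fix i assume i: "i \<in> I"
  have "f i \<in> S4" using PiE_mem[OF f i] by auto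
  then show "(ptimes I f f) i = (pplus I (ptimes I f f) f) i" using i by (simp add: pplus_def ptimes_def pt1)
qed (simp_all add: pplus_def ptimes_def PiE_arb[OF f])

lemma f_I5: assumes f: "f \<in> PS I" and g: "g \<in> PS I" and k: "k \<in> PS I"
  shows "ptimes I f g = pplus I (ptimes I f g) (ptimes I (ptimes I f g) k)"
proof (rule lift)
  fix i assume i: "i \<in> I"
  have "f i \<in> S4" "g i \<in> S4" "k i \<in> S4" using PiE_mem[OF f i] PiE_mem[OF g i] PiE_mem[OF k i] by auto
  then show "(ptimes I f g) i = (pplus I (ptimes I f g) (ptimes I (ptimes I f g) k)) i" using i by (simp add: pplus_def ptimes_def pt2 S4a.cl_m)
qed (simp_all add: pplus_def ptimes_def PiE_arb[OF f] PiE_arb[OF g] PiE_arb[OF k])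

lemma f_I6: assumes f: "f \<in> PS I" and g: "g \<in> PS I" and k: "k \<in> PS I"
  shows "pplus I f (ptimes I g k) = pplus I (pplus I f (ptimes I g k)) (ptimes I g f)"
proof (rule lift)
  fix i assume i: "i \<in> I"
  have "f i \<in> S4" "g i \<in> S4" "k i \<in> S4" using PiE_mem[OF f i] PiE_mem[OF g i] PiE_mem[OF k i] by auto
  then show "(pplus I f (ptimes I g k)) i = (pplus I (pplus I f (ptimes I g k)) (ptimes I g f)) i" using i by (simp add: pplus_def ptimes_def pt3 S4a.cl_m S4a.cl_p)
qed (simp_all add: pplus_def ptimes_def PiE_arb[OF f] PiE_arb[OF g] PiE_arb[OF k])

lemma part1:
  assumes H: "hsp_image I B h D q n"
  shows "ai_semiring D q n \<and> sat_Sigma D q n"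
proof -
  have BP: "\<And>f. f \<in> B \<Longrightarrow> f \<in> PS I" and clp: "\<And>f g. f \<in> B \<Longrightarrow> g \<in> B \<Longrightarrow> pplus I f g \<in> B"
    and clt: "\<And>f g. f \<in> B \<Longrightarrow> g \<in> B \<Longrightarrow> ptimes I f g \<in> B" and img: "h ` B = D"
    and hq: "\<And>f g. f \<in> B \<Longrightarrow> g \<in> B \<Longrightarrow> q (h f) (h g) = h (pplus I f g)"
    and hn: "\<And>f g. f \<in> B \<Longrightarrow> g \<in> B \<Longrightarrow> n (h f) (h g) = h (ptimes I f g)"
    using H unfolding hsp_image_def by auto
  have D1: "P x" if "x \<in> D" "\<And>f. f \<in> B \<Longrightarrow> P (h f)" for P x using that img by auto
  have c: "\<forall>x\<in>D. \<forall>y\<in>D. q x y \<in> D \<and> n x y \<in> D"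
    using img clp clt hq hn by auto
  have i1: "\<forall>x\<in>D. q x x = x"
    by (intro ballI, erule D1) (simp add: hq f_idem BP)
  have i2: "\<forall>x\<in>D. \<forall>y\<in>D. q x y = q y x"
    by (intro ballI, erule D1, erule D1) (simp add: hq f_comm BP)
  have i3: "\<forall>x\<in>D. \<forall>y\<in>D. \<forall>z\<in>D. q (q x y) z = q x (q y z)"
    by (intro ballI, erule D1, erule D1, erule D1) (simp add: hq clp f_passoc BP)
  have i4: "\<forall>x\<in>D. \<forall>y\<in>D. \<forall>z\<in>D. n (n x y) z = n x (n y z)"
    by (intro ballI, erule D1, erule D1, erule D1) (simp add: hn clt f_massoc BP)
  have i5: "\<forall>x\<in>D. \<forall>y\<in>D. \<forall>z\<in>D. n x (q y z) = q (n x y) (n x z)"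
    by (intro ballI, erule D1, erule D1, erule D1) (simp add: hn hq clt clp f_distl BP)
  have i6: "\<forall>x\<in>D. \<forall>y\<in>D. \<forall>z\<in>D. n (q x y) z = q (n x z) (n y z)"
    by (intro ballI, erule D1, erule D1, erule D1) (simp add: hn hq clt clp f_distr BP)
  have s1: "\<forall>x\<in>D. \<forall>y\<in>D. n (n x x) y = n x y"
    by (intro ballI, erule D1, erule D1) (simp add: hn clt f_I1 BP)
  have s2: "\<forall>x\<in>D. \<forall>y\<in>D. n x (n y y) = n x y"
    by (intro ballI, erule D1, erule D1) (simp add: hn clt f_I2 BP)
  have s3: "\<forall>x\<in>D. \<forall>y\<in>D. \<forall>z\<in>D. n (n x y) z = n (n x z) y"
    by (intro ballI, erule D1, erule D1, erule D1) (simp add: hn clt f_I3 BP)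
  have s4: "\<forall>x\<in>D. n x x = q (n x x) x"
    by (intro ballI, erule D1) (simp add: hn hq clt clp f_I4[symmetric] BP)
  have s5: "\<forall>x\<in>D. \<forall>y\<in>D. \<forall>z\<in>D. n x y = q (n x y) (n (n x y) z)"
    by (intro ballI, erule D1, erule D1, erule D1) (simp add: hn hq clt clp f_I5[symmetric] BP)
  have s6: "\<forall>x\<in>D. \<forall>y\<in>D. \<forall>z\<in>D. q x (n y z) = q (q x (n y z)) (n y x)"
    by (intro ballI, erule D1, erule D1, erule D1) (simp add: hn hq clt clp f_I6[symmetric] BP)
  show ?thesis unfolding ai_semiring_def sat_Sigma_def
    using c i1 i2 i3 i4 i5 i6 s1 s2 s3 s4 s5 s6 by blast
qed


lemma part2:
  fixes C :: "'a set" and p m :: "'a \<Rightarrow> 'a \<Rightarrow> 'a"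
  assumes A: "ai_semiring C p m" and S: "sat_Sigma C p m"
  shows "\<exists>(J :: ('a \<Rightarrow> nat) set) B' h'. hsp_image J B' h' C p m"
proof -
  interpret sig C p m using A S by (simp add: sig_def sig_axioms_def ais_def)
  define J :: "('a \<Rightarrow> nat) set" where "J = {\<phi>. \<forall>z\<in>C. \<phi> z \<in> S4}"
  define tf where "tf t = (\<lambda>\<phi>. if \<phi> \<in> J then ev plus4 times4 \<phi> t else undefined)" for t :: "'a trm"
  define B' where "B' = tf ` {t. vars t \<subseteq> C}"
  define h' where "h' F = ev p m id (SOME t. vars t \<subseteq> C \<and> tf t = F)" for F
  have kh: "h' (tf t) = ev p m id t" if vt: "vars t \<subseteq> C" for t
  proof -
    let ?t0 = "SOME t0. vars t0 \<subseteq> C \<and> tf t0 = tf t"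
    have t0: "vars ?t0 \<subseteq> C \<and> tf ?t0 = tf t" by (rule someI[of _ t]) (simp add: vt)
    have "\<forall>\<phi>. (\<forall>z\<in>C. \<phi> z \<in> S4) \<longrightarrow> ev plus4 times4 \<phi> ?t0 = ev plus4 times4 \<phi> t"
    proof (intro allI impI)
      fix \<phi> :: "'a \<Rightarrow> nat" assume "\<forall>z\<in>C. \<phi> z \<in> S4"
      then have "\<phi> \<in> J" by (simp add: J_def)
      then show "ev plus4 times4 \<phi> ?t0 = ev plus4 times4 \<phi> t"
        using fun_cong[OF conjunct2[OF t0], of \<phi>] by (simp add: tf_def)
    qed
    then have "ev p m id ?t0 = ev p m id t" using key t0 vt by blast
    then show ?thesis by (simp add: h'_def)
  qed
  have tfP: "tf (Pl s t) = pplus J (tf s) (tf t)" for s t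
    by (rule ext) (simp add: tf_def pplus_def)
  have tfM: "tf (Ml s t) = ptimes J (tf s) (tf t)" for s t
    by (rule ext) (simp add: tf_def ptimes_def)
  have "hsp_image J B' h' C p m"
    unfolding hsp_image_def
  proof (intro conjI)
    show "B' \<subseteq> PiE J (\<lambda>_. S4)"
    proof
      fix F assume "F \<in> B'"
      then obtain t where vt: "vars t \<subseteq> C" and F: "F = tf t" by (auto simp: B'_def)
      show "F \<in> PiE J (\<lambda>_. S4)"
      proof (rule PiE_I)
        fix \<phi> assume "\<phi> \<in> J"
        then have "\<forall>x\<in>vars t. \<phi> x \<in> S4" using vt by (auto simp: J_def)
        then show "F \<phi> \<in> S4" using F \<open>\<phi> \<in> J\<close> by (simp add: tf_def S4a.ev_cl)
      next
        fix \<phi> assume "\<phi> \<notin> J" then show "F \<phi> = undefined" using F by (simp add: tf_def)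
      qed
    qed
    show "\<forall>f\<in>B'. \<forall>g\<in>B'. pplus J f g \<in> B' \<and> ptimes J f g \<in> B'"
    proof (intro ballI)
      fix f g assume "f \<in> B'" "g \<in> B'"
      then obtain s t where "vars s \<subseteq> C" "vars t \<subseteq> C" "f = tf s" "g = tf t" by (auto simp: B'_def)
      then show "pplus J f g \<in> B' \<and> ptimes J f g \<in> B'"
        unfolding B'_def using tfP[of s t] tfM[of s t]
        by (metis (mono_tags, lifting) Un_subset_iff image_eqI mem_Collect_eq vars.simps(2,3))
    qed
    show "h' ` B' = C"
    proof
      show "h' ` B' \<subseteq> C"
      proof
        fix c assume "c \<in> h' ` B'"
        then obtain t where vt: "vars t \<subseteq> C" and c: "c = h' (tf t)" by (auto simp: B'_def)
        then show "c \<in> C" using kh[OF vt] ev_cl[of t id] by auto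
      qed
      show "C \<subseteq> h' ` B'"
      proof
        fix c assume c: "c \<in> C"
        then have "h' (tf (Var c)) = c" using kh[of "Var c"] by simp
        moreover have "tf (Var c) \<in> B'" using c by (auto simp: B'_def)
        ultimately show "c \<in> h' ` B'" by (metis image_eqI)
      qed
    qed
    show "\<forall>f\<in>B'. \<forall>g\<in>B'. h' (pplus J f g) = p (h' f) (h' g) \<and> h' (ptimes J f g) = m (h' f) (h' g)"
    proof (intro ballI)
      fix f g assume "f \<in> B'" "g \<in> B'"
      then obtain s t where vs: "vars s \<subseteq> C" and vt: "vars t \<subseteq> C" and fg: "f = tf s" "g = tf t"
        by (auto simp: B'_def)
      have "h' (pplus J f g) = p (h' f) (h' g)"
        using kh[of "Pl s t"] kh[OF vs] kh[OF vt] vs vt fg tfP[of s t] by simp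
      moreover have "h' (ptimes J f g) = m (h' f) (h' g)"
        using kh[of "Ml s t"] kh[OF vs] kh[OF vt] vs vt fg tfM[of s t] by simp
      ultimately show "h' (pplus J f g) = p (h' f) (h' g) \<and> h' (ptimes J f g) = m (h' f) (h' g)" ..
    qed
  qed
  then show ?thesis by blast
qed

theorem proposition4p2:
  fixes I :: "'i set" and B :: "('i \<Rightarrow> nat) set" and h :: "('i \<Rightarrow> nat) \<Rightarrow> 'b"
    and D :: "'b set" and q n :: "'b \<Rightarrow> 'b \<Rightarrow> 'b"
    and C :: "'a set" and p m :: "'a \<Rightarrow> 'a \<Rightarrow> 'a"
  shows "(hsp_image I B h D q n \<longrightarrow> ai_semiring D q n \<and> sat_Sigma D q n)
       \<and> (ai_semiring C p m \<and> sat_Sigma C p m \<longrightarrow>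
            (\<exists>(J :: ('a \<Rightarrow> nat) set) B' h'. hsp_image J B' h' C p m))"
  using part1 part2 by blast

end
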